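(* Let $R$ be a commutative ring with identity, $\mathcal S$ an associative $R$-algebra with identity, $\mathcal M$ a $2$-torsion free bimodule over $\mathcal S$, $\delta$ a derivation on $\mathcal S$ and $f:\mathcal S\to\mathcal M$ a bimodule homomorphism over $\mathcal S$. If $D:\mathcal S\to\mathcal M$ is a Jordan $(\delta,f)$-derivation on $\mathcal M$, then for all $x,y,z\in\mathcal S$, $$D(xyz+zyx)=D(x)yz+D(z)yx+f(x)\delta(y)z+f(z)\delta(y)x+f(x)y\delta(z)+f(z)y\delta(x).$$
   Context: A derivation on $\mathcal S$ is an additive map $\delta$ with $\delta(ab)=\delta(a)b+a\delta(b)$. An additive map $D:\mathcal S\to\mathcal M$ is a Jordan $(\delta,f)$-derivation if $D(x^2)=D(x)x+f(x)\delta(x)$ for all $x\in\mathcal S$. $\mathcal M$ is $2$-torsion free if $2m=0$ implies $m=0$. *)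

theory Defs
  imports Main
begin

definition additive :: "('a::ab_group_add \<Rightarrow> 'b::ab_group_add) \<Rightarrow> bool" where
  "additive g \<longleftrightarrow> (\<forall>x y. g (x + y) = g x + g y)"

definition is_algebra :: "('r::comm_ring_1 \<Rightarrow> 's::ring_1 \<Rightarrow> 's) \<Rightarrow> bool" where
  "is_algebra sc \<longleftrightarrow>
     (\<forall>a x y. sc a (x + y) = sc a x + sc a y) \<and>
     (\<forall>a b x. sc (a + b) x = sc a x + sc b x) \<and>
     (\<forall>a b x. sc (a * b) x = sc a (sc b x)) \<and>
     (\<forall>x. sc 1 x = x) \<and>
     (\<forall>a x y. sc a (x * y) = sc a x * y) \<and>
     (\<forall>a x y. sc a (x * y) = x * sc a y)"

definition is_bimodule :: "('s::ring_1 \<Rightarrow> 'm::ab_group_add \<Rightarrow> 'm) \<Rightarrow> ('m \<Rightarrow> 's \<Rightarrow> 'm) \<Rightarrow> bool" where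
  "is_bimodule lm rm \<longleftrightarrow>
     (\<forall>s m n. lm s (m + n) = lm s m + lm s n) \<and>
     (\<forall>s t m. lm (s + t) m = lm s m + lm t m) \<and>
     (\<forall>s t m. lm (s * t) m = lm s (lm t m)) \<and>
     (\<forall>m. lm 1 m = m) \<and>
     (\<forall>s m n. rm (m + n) s = rm m s + rm n s) \<and>
     (\<forall>s t m. rm m (s + t) = rm m s + rm m t) \<and>
     (\<forall>s t m. rm m (s * t) = rm (rm m s) t) \<and>
     (\<forall>m. rm m 1 = m) \<and>
     (\<forall>s t m. lm s (rm m t) = rm (lm s m) t)"

definition two_torsion_free :: "'m::ab_group_add set \<Rightarrow> bool" where
  "two_torsion_free M \<longleftrightarrow> (\<forall>m\<in>M. m + m = 0 \<longrightarrow> m = 0)"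

definition is_derivation :: "('s::ring_1 \<Rightarrow> 's) \<Rightarrow> bool" where
  "is_derivation d \<longleftrightarrow> additive d \<and> (\<forall>a b. d (a * b) = d a * b + a * d b)"

text \<open>Bimodule homomorphism S \<rightarrow> M, S regarded as a bimodule over itself.\<close>
definition is_bimodule_hom ::
  "('s::ring_1 \<Rightarrow> 'm::ab_group_add \<Rightarrow> 'm) \<Rightarrow> ('m \<Rightarrow> 's \<Rightarrow> 'm) \<Rightarrow> ('s \<Rightarrow> 'm) \<Rightarrow> bool" where
  "is_bimodule_hom lm rm f \<longleftrightarrow> additive f \<and>
     (\<forall>a x. f (a * x) = lm a (f x)) \<and> (\<forall>x a. f (x * a) = rm (f x) a)"

definition is_jordan_der ::
  "('m::ab_group_add \<Rightarrow> 's::ring_1 \<Rightarrow> 'm) \<Rightarrow> ('s \<Rightarrow> 's) \<Rightarrow> ('s \<Rightarrow> 'm) \<Rightarrow> ('s \<Rightarrow> 'm) \<Rightarrow> bool" where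
  "is_jordan_der rm d f D \<longleftrightarrow> additive D \<and>
     (\<forall>x. D (x * x) = rm (D x) x + rm (f x) (d x))"

end

theory Submission
  imports Defs
begin

lemma aux: "(a::'a::ab_group_add) + a = r + r \<Longrightarrow> (a - r) + (a - r) = 0"
  by (simp add: algebra_simps)

lemma aux2: "(a::'a::ab_group_add) = b + c + e \<Longrightarrow> e = a - b - c"
  by (simp add: algebra_simps)

locale jctx =
  fixes lm :: "'s::ring_1 \<Rightarrow> 'm::ab_group_add \<Rightarrow> 'm"
    and rm :: "'m \<Rightarrow> 's \<Rightarrow> 'm"
    and d :: "'s \<Rightarrow> 's"
    and f D :: "'s \<Rightarrow> 'm"
  assumes bim: "is_bimodule lm rm"
    and tt: "two_torsion_free (UNIV :: 'm set)"
    and der: "is_derivation d"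
    and hom: "is_bimodule_hom lm rm f"
    and jd: "is_jordan_der rm d f D"
begin

lemma Dadd[simp]: "D (x + y) = D x + D y" using jd unfolding is_jordan_der_def additive_def by blast
lemma fadd[simp]: "f (x + y) = f x + f y" using hom unfolding is_bimodule_hom_def additive_def by blast
lemma dadd[simp]: "d (x + y) = d x + d y" using der unfolding is_derivation_def additive_def by blast
lemma dmul[simp]: "d (x * y) = d x * y + x * d y" using der unfolding is_derivation_def by blast
lemma fmul[simp]: "f (x * a) = rm (f x) a" using hom unfolding is_bimodule_hom_def by blast
lemma rml[simp]: "rm (m + n) s = rm m s + rm n s" using bim unfolding is_bimodule_def by blast
lemma rmr[simp]: "rm m (s + t) = rm m s + rm m t" using bim unfolding is_bimodule_def by blast
lemma rmm[simp]: "rm (rm m s) t = rm m (s * t)" using bim unfolding is_bimodule_def by metis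
lemma Dsq[simp]: "D (x * x) = rm (D x) x + rm (f x) (d x)" using jd unfolding is_jordan_der_def by blast

lemma lin: "D (a*b+b*a) = rm (D a) b + rm (D b) a + rm (f a) (d b) + rm (f b) (d a)"
proof -
  have h1: "D((a+b)*(a+b)) = D(a*a) + D(a*b+b*a) + D(b*b)"
    by (simp add: algebra_simps del: Dsq)
  have "D(a*b+b*a) = D((a+b)*(a+b)) - D(a*a) - D(b*b)" using h1 by (simp add: algebra_simps del: Dsq Dadd)
  also have "... = rm (D a) b + rm (D b) a + rm (f a) (d b) + rm (f b) (d a)"
    by (simp only: Dsq) (simp add: algebra_simps)
  finally show ?thesis .
qed


lemma xyx: "D (x*y*x) = rm (D x) (y*x) + rm (f x) (d y * x) + rm (f x) (y * d x)"
proof -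
  let ?b = "x*y+y*x"
  let ?R = "rm (D x) (y*x) + rm (f x) (d y * x) + rm (f x) (y * d x)"
  have e1: "D (x*?b + ?b*x) = rm (D x) ?b + rm (D ?b) x + rm (f x) (d ?b) + rm (f ?b) (d x)" by (rule lin)
  have e2: "D ((x*x)*y + y*(x*x)) = rm (D (x*x)) y + rm (D y) (x*x) + rm (f (x*x)) (d y) + rm (f y) (d (x*x))" by (rule lin)
  have e3: "D ?b = rm (D x) y + rm (D y) x + rm (f x) (d y) + rm (f y) (d x)" by (rule lin)
  have "x*?b + ?b*x = ((x*x)*y + y*(x*x)) + (x*y*x + x*y*x)"
    by (simp add: algebra_simps)
  hence "D (x*?b + ?b*x) = D ((x*x)*y + y*(x*x)) + (D (x*y*x) + D (x*y*x))"
    by (simp only: Dadd)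
  hence "D (x*y*x) + D (x*y*x) = D (x*?b + ?b*x) - D ((x*x)*y + y*(x*x))"
    by (simp add: algebra_simps del: Dadd Dsq)
  also have "... = ?R + ?R"
    unfolding e1 e2 e3 by (simp add: distrib_left distrib_right mult.assoc del: Dadd)
  finally have "(D (x*y*x) - ?R) + (D (x*y*x) - ?R) = 0"
    by (rule aux)
  thus ?thesis using tt unfolding two_torsion_free_def by (metis UNIV_I eq_iff_diff_eq_0)
qed

lemma main: "D (x * y * z + z * y * x) =
           rm (D x) (y * z) + rm (D z) (y * x) + rm (f x) (d y * z) + rm (f z) (d y * x)
           + rm (f x) (y * d z) + rm (f z) (y * d x)"
proof -
  have h: "D ((x+z)*y*(x+z)) = D (x*y*x) + D (z*y*z) + D (x * y * z + z * y * x)"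
    by (simp add: distrib_left distrib_right add_ac)
  hence "D (x * y * z + z * y * x) = D ((x+z)*y*(x+z)) - D (x*y*x) - D (z*y*z)"
    by (rule aux2)
  also have "\<dots> = rm (D x) (y * z) + rm (D z) (y * x) + rm (f x) (d y * z) + rm (f z) (d y * x)
           + rm (f x) (y * d z) + rm (f z) (y * d x)"
    unfolding xyx by (simp add: distrib_left distrib_right mult.assoc)
  finally show ?thesis .
qed

end

theorem lemma3p6:
  fixes sc :: "'r::comm_ring_1 \<Rightarrow> 's::ring_1 \<Rightarrow> 's"
    and lm :: "'s \<Rightarrow> 'm::ab_group_add \<Rightarrow> 'm"
    and rm :: "'m \<Rightarrow> 's \<Rightarrow> 'm"
    and \<delta> :: "'s \<Rightarrow> 's"
    and f D :: "'s \<Rightarrow> 'm"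
  assumes "is_algebra sc"
    and "is_bimodule lm rm"
    and "two_torsion_free (UNIV :: 'm set)"
    and "is_derivation \<delta>"
    and "is_bimodule_hom lm rm f"
    and "is_jordan_der rm \<delta> f D"
  shows "\<forall>x y z. D (x * y * z + z * y * x) =
           rm (D x) (y * z) + rm (D z) (y * x) + rm (f x) (\<delta> y * z) + rm (f z) (\<delta> y * x)
           + rm (f x) (y * \<delta> z) + rm (f z) (y * \<delta> x)"
proof -
  interpret jctx lm rm \<delta> f D using assms by (unfold_locales) auto
  show ?thesis using main by blast
qed

end
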